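(* Let $f:\mathbb{R}^{n\times n}\to\mathbb{R}$ be differentiable and suppose there are constants $\underline{\nu}_f\le\overline{\nu}_f$ with $\frac{\underline{\nu}_f}{2}\|Y-X\|_{\mathsf F}^2\le f(Y)-f(X)-\langle\nabla f(X),Y-X\rangle\le\frac{\overline{\nu}_f}{2}\|Y-X\|_{\mathsf F}^2$ for all $X,Y\in\mathcal{D}_n$. Let $c_2>0$ satisfy $|f(X)-f(Y)|\ge c_2$ for all $X,Y\in\Pi_n$ with $f(X)\ne f(Y)$. Let $0<p<1$, $\epsilon\ge0$, $\overline{\nu}_h=p(1-p)(1+\epsilon)^{p-2}$, $K\ge1$, $\hat X_1,\dots,\hat X_K\in\mathcal{D}_n$, $\bar X=\frac1K\sum_{i=1}^K\hat X_i$. Suppose $0<\mu<\frac{c_2}{2n}$ and $\sigma>\max\{(\overline{\nu}_f-2\mu)/\overline{\nu}_h,0\}$. Then any global minimizer $\tilde X$ of \[ \min_{X\in\mathcal{D}_n}\ f(X)+\sigma\sum_{i,j=1}^n(X_{ij}+\epsilon)^p-\mu\|X-\bar X\|_{\mathsf F}^2 \] is a global minimizer of $\min_{X\in\Pi_n}f(X)$, and $\|\tilde X-\bar X\|_{\mathsf F}\ge\|X^*-\bar X\|_{\mathsf F}$ for every global minimizer $X^*$ of $\min_{X\in\Pi_n}f(X)$.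
   Context: $\Pi_n$ is the set of $n\times n$ permutation matrices and $\mathcal{D}_n=\{X\in\mathbb{R}^{n\times n}: X\mathbf{e}=X^{\mathsf T}\mathbf{e}=\mathbf{e},\ X\ge0\}$ the set of doubly stochastic matrices ($\mathbf e$ the all-ones vector); $\langle M,N\rangle=\mathrm{tr}(M^{\mathsf T}N)$, $\|\cdot\|_{\mathsf F}$ the Frobenius norm. *)

theory Defs
  imports "HOL-Analysis.Analysis"
begin

text \<open>n x n real matrices are rendered as real^'n^'n (n = CARD('n)).
  The inner product on this type is the Frobenius inner product tr(M^T N),
  and norm is the Frobenius norm.\<close>

definition doubly_stochastic :: "(real^'n^'n) set" where
  "doubly_stochastic = {X. (\<forall>i j. X $ i $ j \<ge> 0) \<and>
       (\<forall>i. (\<Sum>j\<in>UNIV. X $ i $ j) = 1) \<and> (\<forall>j. (\<Sum>i\<in>UNIV. X $ i $ j) = 1)}"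

definition perm_matrices :: "(real^'n^'n) set" where
  "perm_matrices = {X. \<exists>p. p permutes (UNIV :: 'n set) \<and>
       X = (\<chi> i j. if p i = j then 1 else 0)}"

end

theory Submission
  imports Defs
begin


lemma deriv_phi:
  fixes e p u :: real
  assumes "u + e > 0"
  shows "((\<lambda>u. (u + e) powr p) has_real_derivative p * (u + e) powr (p - 1)) (at u)"
proof -
  have "((\<lambda>u. u + e) has_real_derivative 1) (at u)" by (auto intro!: derivative_eq_intros)
  from DERIV_chain2[OF has_real_derivative_powr[OF assms] this] show ?thesis by simp
qed

lemma phi_d1:
  fixes e p a b :: real
  assumes e: "e \<ge> 0" and p: "0 < p" "p < 1" and ab: "0 < a" "a \<le> b" "b \<le> 1"
  shows "p * (b + e) powr (p - 1) - p * (a + e) powr (p - 1) \<le> - (p * (1 - p) * (1 + e) powr (p - 2)) * (b - a)"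
proof -
  define nu where "nu = p * (1 - p) * (1 + e) powr (p - 2)"
  define chi where "chi = (\<lambda>u. p * (u + e) powr (p - 1) + nu * u)"
  have d: "(chi has_real_derivative p * ((p - 1) * (u + e) powr (p - 1 - 1)) + nu) (at u)" if "u > 0" for u
    unfolding chi_def using that e
    by (auto intro!: derivative_eq_intros deriv_phi)
  have "chi b \<le> chi a"
  proof (rule DERIV_nonpos_imp_decreasing_open[OF ab(2)])
    fix x assume x: "a < x" "x < b"
    have "(x + e) powr (p - 2) \<ge> (1 + e) powr (p - 2)"
      by (rule powr_mono2') (use x ab e p in auto)
    hence "p*(1-p)*((x+e) powr (p-2) - (1+e) powr (p-2)) \<ge> 0" using p by simp
    hence "p * ((p - 1) * (x + e) powr (p - 1 - 1)) + nu \<le> 0"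
      unfolding nu_def by (simp add: algebra_simps)
    thus "\<exists>y. (chi has_real_derivative y) (at x) \<and> y \<le> 0" using d[of x] x ab by auto
  next
    show "continuous_on {a..b} chi"
      by (rule DERIV_continuous_on[of _ _ "\<lambda>u. p * ((p - 1) * (u + e) powr (p - 1 - 1)) + nu"])
         (use d ab in \<open>auto intro: has_field_derivative_at_within\<close>)
  qed
  thus ?thesis unfolding chi_def nu_def by (simp add: algebra_simps)
qed

lemma phi_mid_pos:
  fixes e p x d :: real
  assumes e: "e \<ge> 0" and p: "0 < p" "p < 1" and d: "0 \<le> d" "x - d \<ge> 0" "x + d \<le> 1"
  shows "(x + d + e) powr p + (x - d + e) powr p - 2 * (x + e) powr p \<le> - (p * (1 - p) * (1 + e) powr (p - 2)) * d\<^sup>2"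
proof -
  define nu where "nu = p * (1 - p) * (1 + e) powr (p - 2)"
  define psi where "psi = (\<lambda>s. (x + s + e) powr p + (x - s + e) powr p - 2 * (x + e) powr p + nu * s\<^sup>2)"
  have "psi d \<le> psi 0"
  proof (rule DERIV_nonpos_imp_decreasing_open[OF d(1)])
    fix s assume s: "0 < s" "s < d"
    have pos1: "x - s + e > 0" "x + s + e > 0" using s d e by auto
    have d1: "((\<lambda>s. (x + s + e) powr p) has_real_derivative p * (x + s + e) powr (p - 1)) (at s)"
    proof -
      have "((\<lambda>s. x + s) has_real_derivative 1) (at s)" by (auto intro!: derivative_eq_intros)
      from DERIV_chain2[OF deriv_phi[of "x+s" e p] this] pos1 show ?thesis by (simp add: add.assoc)
    qed
    have d2: "((\<lambda>s. (x - s + e) powr p) has_real_derivative - (p * (x - s + e) powr (p - 1))) (at s)"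
    proof -
      have "((\<lambda>s. x - s) has_real_derivative -1) (at s)" by (auto intro!: derivative_eq_intros)
      from DERIV_chain2[OF deriv_phi[of "x-s" e p] this] pos1 show ?thesis by (simp add: add.assoc)
    qed
    have dd: "(psi has_real_derivative p * (x + s + e) powr (p - 1) - p * (x - s + e) powr (p - 1) + nu * (2 * s)) (at s)"
      unfolding psi_def
      by (rule derivative_eq_intros d1 d2 | simp)+
    have "p * (x + s + e) powr (p - 1) - p * (x - s + e) powr (p - 1) \<le> - nu * ((x + s) - (x - s))"
      unfolding nu_def by (rule phi_d1) (use e p s d in auto)
    hence "p * (x + s + e) powr (p - 1) - p * (x - s + e) powr (p - 1) + nu * (2 * s) \<le> 0"
      by (simp add: algebra_simps)
    with dd show "\<exists>y. (psi has_real_derivative y) (at s) \<and> y \<le> 0" by blast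
  next
    show "continuous_on {0..d} psi"
      unfolding psi_def using d e p
      by (intro continuous_intros continuous_on_powr') auto
  qed
  moreover have "psi 0 = 0" unfolding psi_def by simp
  ultimately show ?thesis unfolding psi_def nu_def by (simp add: algebra_simps)
qed

lemma phi_mid:
  fixes e p x d :: real
  assumes e: "e \<ge> 0" and p: "0 < p" "p < 1" and d: "x - d \<ge> 0" "x + d \<le> 1" "x - d \<le> 1" "x + d \<ge> 0"
  shows "(x + d + e) powr p + (x - d + e) powr p - 2 * (x + e) powr p \<le> - (p * (1 - p) * (1 + e) powr (p - 2)) * d\<^sup>2"
proof (cases "d \<ge> 0")
  case True show ?thesis by (rule phi_mid_pos[OF e p True d(1,2)])
next
  case False
  hence "0 \<le> -d" by simp
  have h: "x - - d \<ge> 0" "x + - d \<le> 1" using d by auto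
  have eq: "x + -d + e = x - d + e" "x - -d + e = x + d + e" "(-d)\<^sup>2 = d\<^sup>2" by simp_all
  have "(x + -d + e) powr p + (x - -d + e) powr p - 2 * (x + e) powr p \<le> - (p * (1 - p) * (1 + e) powr (p - 2)) * (-d)\<^sup>2"
    by (rule phi_mid_pos[OF e p \<open>0 \<le> -d\<close> h])
  thus ?thesis unfolding eq by linarith
qed



definition frac :: "real^'n^'n \<Rightarrow> 'n \<Rightarrow> 'n \<Rightarrow> bool" where
  "frac X i j \<longleftrightarrow> 0 < X $ i $ j \<and> X $ i $ j < 1"

lemma ds_nonneg: "X \<in> doubly_stochastic \<Longrightarrow> X $ i $ j \<ge> 0"
  unfolding doubly_stochastic_def by auto

lemma ds_row: "X \<in> doubly_stochastic \<Longrightarrow> (\<Sum>j\<in>UNIV. X $ i $ j) = 1"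
  unfolding doubly_stochastic_def by auto

lemma ds_col: "X \<in> doubly_stochastic \<Longrightarrow> (\<Sum>i\<in>UNIV. X $ i $ j) = 1"
  unfolding doubly_stochastic_def by auto

lemma ds_le1: assumes "X \<in> doubly_stochastic" shows "X $ i $ j \<le> 1"
proof -
  have "X $ i $ j \<le> (\<Sum>j\<in>UNIV. X $ i $ j)"
    by (rule member_le_sum) (use ds_nonneg[OF assms] in auto)
  thus ?thesis using ds_row[OF assms] by simp
qed

lemma sum_other_frac:
  fixes g :: "'a::finite \<Rightarrow> real"
  assumes nn: "\<And>k. g k \<ge> 0" and s: "sum g UNIV = 1" and fr: "0 < g j" "g j < 1"
  shows "\<exists>j'. j' \<noteq> j \<and> 0 < g j' \<and> g j' < 1"
proof (rule ccontr)
  assume "\<not> ?thesis"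
  hence o: "\<And>j'. j' \<noteq> j \<Longrightarrow> g j' = 0 \<or> g j' \<ge> 1" using nn by (meson not_le order_le_less)
  have split: "sum g UNIV = g j + sum g (UNIV - {j})"
    by (simp add: sum.remove)
  show False
  proof (cases "\<exists>j'. j' \<noteq> j \<and> g j' \<ge> 1")
    case True
    then obtain j' where j': "j' \<noteq> j" "g j' \<ge> 1" by auto
    have "g j' \<le> sum g (UNIV - {j})" by (rule member_le_sum) (use nn j' in auto)
    thus False using split s j' fr by linarith
  next
    case False
    hence "sum g (UNIV - {j}) = 0" using o by (intro sum.neutral) force
    thus False using split s fr by linarith
  qed
qed

lemma row_other: "X \<in> doubly_stochastic \<Longrightarrow> frac X i j \<Longrightarrow> \<exists>j'. j' \<noteq> j \<and> frac X i j'"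
  unfolding frac_def
  by (rule sum_other_frac[of "\<lambda>j. X $ i $ j"]) (auto simp: ds_nonneg ds_row)

lemma col_other: "X \<in> doubly_stochastic \<Longrightarrow> frac X i j \<Longrightarrow> \<exists>i'. i' \<noteq> i \<and> frac X i' j"
  unfolding frac_def
  by (rule sum_other_frac[of "\<lambda>i. X $ i $ j"]) (auto simp: ds_nonneg ds_col)

lemma sum_two_ge:
  fixes g :: "'a::finite \<Rightarrow> real"
  assumes nn: "\<And>k. g k \<ge> 0" and "a \<noteq> b"
  shows "g a + g b \<le> sum g UNIV"
proof -
  have "sum g {a, b} \<le> sum g UNIV" by (rule sum_mono2) (use nn in auto)
  thus ?thesis using assms by simp
qed

lemma not_perm_frac:
  assumes X: "X \<in> doubly_stochastic" and np: "X \<notin> perm_matrices"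
  shows "\<exists>i j. frac X i j"
proof (rule ccontr)
  assume "\<not> ?thesis"
  hence nf: "\<not> frac X i j" for i j by blast
  have zo: "X $ i $ j = 0 \<or> X $ i $ j = 1" for i j
    using nf[of i j] ds_nonneg[OF X, of i j] ds_le1[OF X, of i j] unfolding frac_def by linarith
  have ex: "\<exists>j. X $ i $ j = 1" for i
  proof (rule ccontr)
    assume "\<not> ?thesis"
    hence "(\<Sum>j\<in>UNIV. X $ i $ j) = 0" using zo by (intro sum.neutral) auto
    thus False using ds_row[OF X, of i] by simp
  qed
  have un: "j = j'" if "X $ i $ j = 1" "X $ i $ j' = 1" for i j j'
  proof (rule ccontr)
    assume "j \<noteq> j'"
    from sum_two_ge[of "\<lambda>j. X $ i $ j", OF _ this] ds_nonneg[OF X] ds_row[OF X, of i] that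
    show False by auto
  qed
  define p where "p i = (THE j. X $ i $ j = 1)" for i
  have eu: "\<exists>!j. X $ i $ j = 1" for i using ex[of i] un[of i] by blast
  have pi: "X $ i $ p i = 1" for i
    unfolding p_def by (rule theI'[OF eu])
  have pj: "X $ i $ j = (if p i = j then 1 else 0)" for i j
  proof (cases "p i = j")
    case True thus ?thesis using pi[of i] by simp
  next
    case False
    hence "X $ i $ j \<noteq> 1" using un[of i j "p i"] pi[of i] by metis
    thus ?thesis using zo[of i j] False by simp
  qed
  have "inj p"
  proof (rule injI)
    fix i i' assume "p i = p i'"
    show "i = i'"
    proof (rule ccontr)
      assume "i \<noteq> i'"
      have "X $ i $ p i' + X $ i' $ p i' \<le> (\<Sum>k\<in>UNIV. X $ k $ p i')"
        by (rule sum_two_ge[of "\<lambda>k. X $ k $ p i'"]) (use ds_nonneg[OF X] \<open>i \<noteq> i'\<close> in auto)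
      moreover have "X $ i $ p i' = 1" using pi[of i] \<open>p i = p i'\<close> by simp
      ultimately show False using ds_col[OF X, of "p i'"] pi[of i'] by simp
    qed
  qed
  hence "bij p" using finite_UNIV_inj_surj[of p] by (simp add: bij_def)
  hence "p permutes (UNIV :: 'a set)" by (intro bij_imp_permutes) auto
  moreover have "X = (\<chi> i j. if p i = j then 1 else 0)"
    by (simp add: vec_eq_iff pj)
  ultimately have "X \<in> perm_matrices" unfolding perm_matrices_def by blast
  thus False using np by simp
qed

lemma sum_ind1: "(\<Sum>k\<in>(UNIV::'a::finite set). if c = k \<and> P then (1::real) else 0) = (if P then 1 else 0)"
  by (cases P) simp_all

lemma sum_ind2: "(\<Sum>k\<in>(UNIV::'a::finite set). if P \<and> c = k then (1::real) else 0) = (if P then 1 else 0)"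
  by (cases P) simp_all

lemma cycle_dir:
  fixes X :: "real^'n^'n"
  assumes X: "X \<in> doubly_stochastic" and f0: "frac X i0 j0"
  shows "\<exists>D::real^'n^'n. D \<noteq> 0 \<and> (\<forall>i. (\<Sum>j\<in>UNIV. D $ i $ j) = 0) \<and>
            (\<forall>j. (\<Sum>i\<in>UNIV. D $ i $ j) = 0) \<and> (\<forall>i j. D $ i $ j \<noteq> 0 \<longrightarrow> frac X i j)"
proof -
  define nj where "nj i j = (SOME j'. j' \<noteq> j \<and> frac X i j')" for i j
  define ni where "ni i j = (SOME i'. i' \<noteq> i \<and> frac X i' j)" for i j
  have nj: "frac X i j \<Longrightarrow> nj i j \<noteq> j \<and> frac X i (nj i j)" for i j
    unfolding nj_def by (rule someI_ex) (rule row_other[OF X])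
  have ni: "frac X i j \<Longrightarrow> ni i j \<noteq> i \<and> frac X (ni i j) j" for i j
    unfolding ni_def by (rule someI_ex) (rule col_other[OF X])
  define step where "step = (\<lambda>(i,j). (ni i (nj i j), nj i j))"
  define I where "I t = fst ((step ^^ t) (i0, j0))" for t
  define J where "J t = snd ((step ^^ t) (i0, j0))" for t
  have IJS: "I (Suc t) = ni (I t) (J (Suc t))" "J (Suc t) = nj (I t) (J t)" for t
    unfolding I_def J_def step_def by (simp_all add: case_prod_beta)
  have fr: "frac X (I t) (J t)" for t
  proof (induction t)
    case 0 thus ?case using f0 by (simp add: I_def J_def)
  next
    case (Suc t)
    from nj[OF Suc] have "frac X (I t) (J (Suc t))" by (simp add: IJS)
    from ni[OF this] show ?case by (simp add: IJS)
  qed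
  have fr2: "frac X (I t) (J (Suc t))" and ne: "J (Suc t) \<noteq> J t" "I (Suc t) \<noteq> I t" for t
  proof -
    have h1: "nj (I t) (J t) \<noteq> J t \<and> frac X (I t) (nj (I t) (J t))" by (rule nj[OF fr[of t]])
    have h2: "ni (I t) (nj (I t) (J t)) \<noteq> I t" using ni[OF h1[THEN conjunct2]] by simp
    show "frac X (I t) (J (Suc t))" "J (Suc t) \<noteq> J t" "I (Suc t) \<noteq> I t"
      using h1 h2 by (simp_all add: IJS)
  qed
  have "\<not> inj I"
  proof
    assume "inj I"
    hence "finite (UNIV :: nat set)" using finite_imageD[of I UNIV] by simp
    thus False by simp
  qed
  then obtain a0 b0 where "a0 \<noteq> b0" "I a0 = I b0" unfolding inj_def by blast
  hence "\<exists>a<max a0 b0. I a = I (max a0 b0)" by (cases "a0 < b0") (auto simp: max_def, metis linorder_neqE_nat)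
  define b where "b = (LEAST b. \<exists>a<b. I a = I b)"
  have "\<exists>a<b. I a = I b" unfolding b_def by (rule LeastI_ex) (use \<open>\<exists>a<max a0 b0. _\<close> in blast)
  then obtain a where ab: "a < b" "I a = I b" by blast
  have dist: "I s \<noteq> I t" if "s < t" "t < b" for s t
  proof
    assume "I s = I t"
    hence "b \<le> t" unfolding b_def by (intro Least_le) (use that in blast)
    thus False using that by simp
  qed
  define D :: "real^'n^'n" where
    "D = (\<chi> k l. \<Sum>t\<in>{a..<b}. (if I t = k \<and> J (Suc t) = l then 1 else 0)
                                  - (if I (Suc t) = k \<and> J (Suc t) = l then 1 else 0))"
  have Dij: "D $ k $ l = (\<Sum>t\<in>{a..<b}. (if I t = k \<and> J (Suc t) = l then 1 else 0)
                                  - (if I (Suc t) = k \<and> J (Suc t) = l then 1 else 0))" for k l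
    unfolding D_def by simp
  have rows: "(\<Sum>l\<in>UNIV. D $ k $ l) = 0" for k
  proof -
    have "(\<Sum>l\<in>UNIV. D $ k $ l) = (\<Sum>t\<in>{a..<b}. \<Sum>l\<in>UNIV. (if I t = k \<and> J (Suc t) = l then 1 else 0)
                                  - (if I (Suc t) = k \<and> J (Suc t) = l then (1::real) else 0))"
      unfolding Dij by (rule sum.swap)
    also have "\<dots> = (\<Sum>t\<in>{a..<b}. (if I t = k then 1 else 0) - (if I (Suc t) = k then 1 else 0))"
      by (intro sum.cong refl) (simp add: sum_subtractf sum_ind2)
    also have "\<dots> = - (\<Sum>t\<in>{a..<b}. (if I (Suc t) = k then 1 else 0) - (if I t = k then (1::real) else 0))"
      by (simp add: sum_negf[symmetric])
    also have "\<dots> = 0" using sum_Suc_diff'[of a b "\<lambda>t. if I t = k then (1::real) else 0"] ab by simp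
    finally show ?thesis .
  qed
  have cols: "(\<Sum>k\<in>UNIV. D $ k $ l) = 0" for l
  proof -
    have "(\<Sum>k\<in>UNIV. D $ k $ l) = (\<Sum>t\<in>{a..<b}. \<Sum>k\<in>UNIV. (if I t = k \<and> J (Suc t) = l then 1 else 0)
                                  - (if I (Suc t) = k \<and> J (Suc t) = l then (1::real) else 0))"
      unfolding Dij by (rule sum.swap)
    also have "\<dots> = 0"
      by (rule sum.neutral, rule ballI) (simp add: sum_subtractf sum_ind1)
    finally show ?thesis .
  qed
  have supp: "frac X k l" if "D $ k $ l \<noteq> 0" for k l
  proof (rule ccontr)
    assume "\<not> frac X k l"
    have "D $ k $ l = 0" unfolding Dij
    proof (rule sum.neutral, rule ballI)
      fix t assume "t \<in> {a..<b}"
      have "\<not> (I t = k \<and> J (Suc t) = l)" using fr2[of t] \<open>\<not> frac X k l\<close> by auto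
      moreover have "\<not> (I (Suc t) = k \<and> J (Suc t) = l)" using fr[of "Suc t"] \<open>\<not> frac X k l\<close> by auto
      ultimately show "(if I t = k \<and> J (Suc t) = l then 1 else 0) - (if I (Suc t) = k \<and> J (Suc t) = l then 1 else (0::real)) = 0"
        by simp
    qed
    thus False using that by simp
  qed
  have "D $ I (Suc a) $ J (Suc a) = -1"
  proof -
    have "(\<Sum>t\<in>{a..<b}. (if I t = I (Suc a) \<and> J (Suc t) = J (Suc a) then 1 else (0::real))) = 0"
    proof (intro sum.neutral ballI)
      fix t assume t: "t \<in> {a..<b}"
      have "\<not> (I t = I (Suc a) \<and> J (Suc t) = J (Suc a))"
      proof
        assume h: "I t = I (Suc a) \<and> J (Suc t) = J (Suc a)"
        show False
        proof (cases "t = a")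
          case True thus False using h ne[of a] by simp
        next
          case False
          show False
          proof (cases "t = Suc a")
            case True thus False using h ne[of "Suc a"] by simp
          next
            case False
            hence "Suc a < t" using t \<open>t \<noteq> a\<close> by auto
            hence "I t \<noteq> I (Suc a)" using dist[of "Suc a" t] t by auto
            thus False using h by simp
          qed
        qed
      qed
      thus "(if I t = I (Suc a) \<and> J (Suc t) = J (Suc a) then 1 else (0::real)) = 0" by simp
    qed
    moreover have "(\<Sum>t\<in>{a..<b}. (if I (Suc t) = I (Suc a) \<and> J (Suc t) = J (Suc a) then 1 else (0::real))) = 1"
    proof -
      have "(\<Sum>t\<in>{a..<b}. (if I (Suc t) = I (Suc a) \<and> J (Suc t) = J (Suc a) then 1 else (0::real)))
           = (\<Sum>t\<in>{a..<b}. (if t = a then 1 else (0::real)))"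
      proof (intro sum.cong refl)
        fix t assume t: "t \<in> {a..<b}"
        have "I (Suc t) \<noteq> I (Suc a)" if "t \<noteq> a"
        proof (cases "Suc t = b")
          case True thus ?thesis using ab ne[of a] by simp
        next
          case False
          thus ?thesis using dist[of "Suc a" "Suc t"] t that by auto
        qed
        thus "(if I (Suc t) = I (Suc a) \<and> J (Suc t) = J (Suc a) then 1 else (0::real)) = (if t = a then 1 else 0)"
          by auto
      qed
      also have "\<dots> = 1" using ab by simp
      finally show ?thesis .
    qed
    ultimately show ?thesis unfolding Dij sum_subtractf by simp
  qed
  hence "D \<noteq> 0" by (metis neg_equal_0_iff_equal zero_index zero_neq_one)
  with rows cols supp show ?thesis by blast
qed


lemma perturb:
  fixes X D :: "real^'n^'n"
  assumes X: "X \<in> doubly_stochastic"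
    and rows: "\<forall>i. (\<Sum>j\<in>UNIV. D $ i $ j) = 0" and cols: "\<forall>j. (\<Sum>i\<in>UNIV. D $ i $ j) = 0"
    and supp: "\<forall>i j. D $ i $ j \<noteq> 0 \<longrightarrow> frac X i j"
  shows "\<exists>\<tau>>0. X + \<tau> *\<^sub>R D \<in> doubly_stochastic \<and> X - \<tau> *\<^sub>R D \<in> doubly_stochastic"
proof -
  have ev1: "\<forall>\<^sub>F \<tau> in at_right (0::real). X $ i $ j - \<tau> * \<bar>D $ i $ j\<bar> \<ge> 0" for i j
  proof (cases "D $ i $ j = 0")
    case True thus ?thesis using ds_nonneg[OF X, of i j] by simp
  next
    case False
    hence pos: "X $ i $ j > 0" using supp unfolding frac_def by auto
    have "((\<lambda>\<tau>. X $ i $ j - \<tau> * \<bar>D $ i $ j\<bar>) \<longlongrightarrow> X $ i $ j - 0 * \<bar>D $ i $ j\<bar>) (at_right 0)"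
      by (intro tendsto_intros)
    hence "\<forall>\<^sub>F \<tau> in at_right 0. 0 < X $ i $ j - \<tau> * \<bar>D $ i $ j\<bar>"
      using pos by (intro order_tendstoD(1)) auto
    thus ?thesis by eventually_elim simp
  qed
  have "\<forall>\<^sub>F \<tau> in at_right (0::real). \<forall>i. \<forall>j. X $ i $ j - \<tau> * \<bar>D $ i $ j\<bar> \<ge> 0"
    by (intro eventually_all_finite ev1)
  moreover have "\<forall>\<^sub>F \<tau> in at_right (0::real). 0 < \<tau>" by (rule eventually_at_right_less)
  ultimately have "\<forall>\<^sub>F \<tau> in at_right (0::real). 0 < \<tau> \<and> (\<forall>i. \<forall>j. X $ i $ j - \<tau> * \<bar>D $ i $ j\<bar> \<ge> 0)"
    by eventually_elim auto
  then obtain \<tau> where t: "0 < \<tau>" "\<And>i j. X $ i $ j - \<tau> * \<bar>D $ i $ j\<bar> \<ge> 0"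
    using eventually_happens'[OF trivial_limit_at_right_real] by blast
  have nn: "X $ i $ j + \<tau> * D $ i $ j \<ge> 0" "X $ i $ j - \<tau> * D $ i $ j \<ge> 0" for i j
  proof -
    have "\<tau> * D $ i $ j \<le> \<tau> * \<bar>D $ i $ j\<bar>"
      using t(1) by (intro mult_left_mono) auto
    moreover have "\<tau> * (- D $ i $ j) \<le> \<tau> * \<bar>D $ i $ j\<bar>"
      using t(1) by (intro mult_left_mono) auto
    ultimately have "\<tau> * D $ i $ j \<le> \<tau> * \<bar>D $ i $ j\<bar>" "- (\<tau> * D $ i $ j) \<le> \<tau> * \<bar>D $ i $ j\<bar>"
      by simp_all
    thus "X $ i $ j + \<tau> * D $ i $ j \<ge> 0" "X $ i $ j - \<tau> * D $ i $ j \<ge> 0" using t(2)[of i j] by linarith+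
  qed
  have r1: "(\<Sum>j\<in>UNIV. X $ i $ j + \<tau> * D $ i $ j) = 1" "(\<Sum>j\<in>UNIV. X $ i $ j - \<tau> * D $ i $ j) = 1" for i
    using ds_row[OF X, of i] rows by (simp_all add: sum.distrib sum_subtractf sum_distrib_left[symmetric])
  have c1: "(\<Sum>i\<in>UNIV. X $ i $ j + \<tau> * D $ i $ j) = 1" "(\<Sum>i\<in>UNIV. X $ i $ j - \<tau> * D $ i $ j) = 1" for j
    using ds_col[OF X, of j] cols by (simp_all add: sum.distrib sum_subtractf sum_distrib_left[symmetric])
  have "X + \<tau> *\<^sub>R D \<in> doubly_stochastic" "X - \<tau> *\<^sub>R D \<in> doubly_stochastic"
    unfolding doubly_stochastic_def using nn r1 c1 by simp_all
  with t(1) show ?thesis by blast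
qed



lemma norm2_eq: "(norm (D::real^'n^'m))\<^sup>2 = (\<Sum>i\<in>UNIV. \<Sum>j\<in>UNIV. (D $ i $ j)\<^sup>2)"
  by (simp only: power2_norm_eq_inner) (simp add: inner_vec_def power2_eq_square)

lemma perm_matrix_obtain:
  assumes "P \<in> perm_matrices"
  obtains p where "p permutes (UNIV::'n set)" "\<And>i j. (P::real^'n^'n) $ i $ j = (if p i = j then 1 else 0)"
  using assms unfolding perm_matrices_def by auto

lemma perm_ds: assumes "P \<in> perm_matrices" shows "P \<in> doubly_stochastic"
proof -
  obtain p where p: "p permutes (UNIV::'a set)" and P: "\<And>i j. P $ i $ j = (if p i = j then 1 else 0)"
    using perm_matrix_obtain[OF assms] by blast
  have c: "(\<Sum>i\<in>UNIV. P $ i $ j) = 1" for j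
  proof -
    have "(\<Sum>i\<in>UNIV. P $ i $ j) = (\<Sum>i\<in>UNIV. if inv p j = i then 1 else 0)"
      unfolding P using permutes_inv_eq[OF p] by (intro sum.cong) auto
    thus ?thesis by simp
  qed
  show ?thesis unfolding doubly_stochastic_def using c by (auto simp: P)
qed

lemma perm_inner:
  fixes P Y :: "real^'n^'n"
  assumes "P \<in> perm_matrices" "\<And>i j. 0 \<le> Y $ i $ j \<and> Y $ i $ j \<le> 1"
  shows "0 \<le> P \<bullet> Y \<and> P \<bullet> Y \<le> real CARD('n)"
proof -
  obtain p where p: "p permutes (UNIV::'n set)" and P: "\<And>i j. (P::real^'n^'n) $ i $ j = (if p i = j then 1 else 0)"
    using perm_matrix_obtain[OF assms(1)] by blast
  have pt: "P $ i $ j * Y $ i $ j = (if p i = j then Y $ i $ j else 0)" for i j by (simp add: P)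
  have "P \<bullet> Y = (\<Sum>i\<in>UNIV. Y $ i $ p i)"
    by (simp add: inner_vec_def pt)
  moreover have "(\<Sum>i\<in>UNIV. Y $ i $ p i) \<le> (\<Sum>i\<in>(UNIV::'n set). 1)" by (rule sum_mono) (use assms(2) in auto)
  moreover have "0 \<le> (\<Sum>i\<in>UNIV. Y $ i $ p i)" by (rule sum_nonneg) (use assms(2) in auto)
  ultimately show ?thesis by simp
qed

lemma perm_norm:
  assumes "P \<in> perm_matrices"
  shows "(norm (P - Y))\<^sup>2 = real CARD('n) - 2 * (P \<bullet> Y) + (norm (Y::real^'n^'n))\<^sup>2"
proof -
  obtain p where p: "p permutes (UNIV::'n set)" and P: "\<And>i j. (P::real^'n^'n) $ i $ j = (if p i = j then 1 else 0)"
    using perm_matrix_obtain[OF assms(1)] by blast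
  have sq: "(P $ i $ j)\<^sup>2 = (if p i = j then 1 else 0)" for i j by (simp add: P)
  have "(norm P)\<^sup>2 = real CARD('n)"
    unfolding norm2_eq sq by simp
  moreover have "(norm (P - Y))\<^sup>2 = (norm P)\<^sup>2 - 2 * (P \<bullet> Y) + (norm Y)\<^sup>2"
    by (simp add: power2_norm_eq_inner inner_diff_left inner_diff_right inner_commute)
  ultimately show ?thesis by simp
qed

lemma perm_h:
  assumes "P \<in> perm_matrices"
  shows "(\<Sum>i\<in>UNIV. \<Sum>j\<in>UNIV. ((P::real^'n^'n) $ i $ j + e) powr q)
          = real CARD('n) * (real CARD('n) * e powr q + ((1 + e) powr q - e powr q))"
proof -
  obtain p where p: "p permutes (UNIV::'n set)" and P: "\<And>i j. (P::real^'n^'n) $ i $ j = (if p i = j then 1 else 0)"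
    using perm_matrix_obtain[OF assms(1)] by blast
  have "(P $ i $ j + e) powr q = e powr q + (if p i = j then (1 + e) powr q - e powr q else 0)" for i j
    by (simp add: P)
  hence row: "(\<Sum>j\<in>UNIV. (P $ i $ j + e) powr q) = real CARD('n) * e powr q + ((1 + e) powr q - e powr q)" for i
    by (simp add: sum.distrib)
  have "(\<Sum>i\<in>UNIV. \<Sum>j\<in>UNIV. ((P::real^'n^'n) $ i $ j + e) powr q)
     = (\<Sum>i\<in>(UNIV::'n set). real CARD('n) * e powr q + ((1 + e) powr q - e powr q))"
    by (rule sum.cong[OF refl]) (rule row)
  also have "\<dots> = real CARD('n) * (real CARD('n) * e powr q + ((1 + e) powr q - e powr q))"
    by (rule sum_constant)
  finally show ?thesis .
qed

theorem theorem5p2: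
  fixes f :: "real^'n^'n \<Rightarrow> real"
    and gradf :: "real^'n^'n \<Rightarrow> real^'n^'n"
    and nu_lo nu_hi c2 p eps mu sigma :: real
    and K :: nat
    and Xhat :: "nat \<Rightarrow> real^'n^'n"
    and Xbar Xt :: "real^'n^'n"
  assumes grad: "\<forall>X. (f has_derivative (\<lambda>H. gradf X \<bullet> H)) (at X)"
    and nu_le: "nu_lo \<le> nu_hi"
    and strong: "\<forall>X\<in>doubly_stochastic. \<forall>Y\<in>doubly_stochastic.
        nu_lo / 2 * (norm (Y - X))\<^sup>2 \<le> f Y - f X - gradf X \<bullet> (Y - X) \<and>
        f Y - f X - gradf X \<bullet> (Y - X) \<le> nu_hi / 2 * (norm (Y - X))\<^sup>2"
    and c2_pos: "c2 > 0"
    and c2: "\<forall>X\<in>perm_matrices. \<forall>Y\<in>perm_matrices. f X \<noteq> f Y \<longrightarrow> \<bar>f X - f Y\<bar> \<ge> c2"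
    and p: "0 < p" "p < 1"
    and eps: "eps \<ge> 0"
    and K: "K \<ge> 1"
    and Xhat: "\<forall>i\<in>{1..K}. Xhat i \<in> doubly_stochastic"
    and Xbar: "Xbar = (1 / real K) *\<^sub>R (\<Sum>i=1..K. Xhat i)"
    and mu: "0 < mu" "mu < c2 / (2 * real CARD('n))"
    and sigma: "sigma > max ((nu_hi - 2 * mu) / (p * (1 - p) * (1 + eps) powr (p - 2))) 0"
    and Xt_mem: "Xt \<in> doubly_stochastic"
    and Xt_min: "\<forall>X\<in>doubly_stochastic.
        f Xt + sigma * (\<Sum>i\<in>UNIV. \<Sum>j\<in>UNIV. (Xt $ i $ j + eps) powr p) - mu * (norm (Xt - Xbar))\<^sup>2
        \<le> f X + sigma * (\<Sum>i\<in>UNIV. \<Sum>j\<in>UNIV. (X $ i $ j + eps) powr p) - mu * (norm (X - Xbar))\<^sup>2"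
  shows "Xt \<in> perm_matrices \<and> (\<forall>Y\<in>perm_matrices. f Xt \<le> f Y) \<and>
         (\<forall>Xs\<in>perm_matrices. (\<forall>Y\<in>perm_matrices. f Xs \<le> f Y) \<longrightarrow>
              norm (Xt - Xbar) \<ge> norm (Xs - Xbar))"
proof -
  define nh where "nh = p * (1 - p) * (1 + eps) powr (p - 2)"
  have nh_pos: "nh > 0" using p eps by (simp add: nh_def)
  have sig_pos: "sigma > 0" using sigma by simp
  have "(nu_hi - 2 * mu) / nh < sigma" using sigma by (simp add: nh_def)
  hence sig_nh: "nu_hi - 2 * mu < sigma * nh" using nh_pos by (simp add: pos_divide_less_eq)
  define h where "h X = (\<Sum>i\<in>UNIV. \<Sum>j\<in>UNIV. (X $ i $ j + eps) powr p)" for X :: "real^'n^'n"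
  define F where "F X = f X + sigma * h X - mu * (norm (X - Xbar))\<^sup>2" for X
  have Fmin: "\<And>X. X \<in> doubly_stochastic \<Longrightarrow> F Xt \<le> F X" using Xt_min unfolding F_def h_def by blast
  have Xt_perm: "Xt \<in> perm_matrices"
  proof (rule ccontr)
    assume np: "Xt \<notin> perm_matrices"
    obtain i0 j0 where "frac Xt i0 j0" using not_perm_frac[OF Xt_mem np] by blast
    then obtain D :: "real^'n^'n" where D: "D \<noteq> 0" "\<forall>i. (\<Sum>j\<in>UNIV. D $ i $ j) = 0" "\<forall>j. (\<Sum>i\<in>UNIV. D $ i $ j) = 0"
        "\<forall>i j. D $ i $ j \<noteq> 0 \<longrightarrow> frac Xt i j"
      using cycle_dir[OF Xt_mem] by blast
    then obtain \<tau> where tau: "\<tau> > 0" "Xt + \<tau> *\<^sub>R D \<in> doubly_stochastic" "Xt - \<tau> *\<^sub>R D \<in> doubly_stochastic"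
      using perturb[OF Xt_mem] by blast
    define E where "E = \<tau> *\<^sub>R D"
    have E0: "E \<noteq> 0" using D(1) tau(1) by (simp add: E_def)
    have Ep: "Xt + E \<in> doubly_stochastic" "Xt - E \<in> doubly_stochastic" using tau by (simp_all add: E_def)
    define e2 where "e2 = (norm E)\<^sup>2"
    have e2pos: "e2 > 0" using E0 by (simp add: e2_def)
    have s1: "f (Xt + E) - f Xt - gradf Xt \<bullet> E \<le> nu_hi / 2 * e2"
    proof -
      have "f (Xt + E) - f Xt - gradf Xt \<bullet> (Xt + E - Xt) \<le> nu_hi / 2 * (norm (Xt + E - Xt))\<^sup>2"
        using strong Xt_mem Ep(1) by blast
      thus ?thesis unfolding e2_def by simp
    qed
    have s2: "f (Xt - E) - f Xt + gradf Xt \<bullet> E \<le> nu_hi / 2 * e2"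
    proof -
      have "f (Xt - E) - f Xt - gradf Xt \<bullet> (Xt - E - Xt) \<le> nu_hi / 2 * (norm (Xt - E - Xt))\<^sup>2"
        using strong Xt_mem Ep(2) by blast
      thus ?thesis unfolding e2_def by simp
    qed
    have f_bd: "f (Xt + E) + f (Xt - E) - 2 * f Xt \<le> nu_hi * e2" using s1 s2 by simp
    have n_bd: "(norm (Xt + E - Xbar))\<^sup>2 + (norm (Xt - E - Xbar))\<^sup>2 = 2 * (norm (Xt - Xbar))\<^sup>2 + 2 * e2"
    proof -
      have a: "Xt + E - Xbar = (Xt - Xbar) + E" "Xt - E - Xbar = (Xt - Xbar) - E" by simp_all
      show ?thesis unfolding a e2_def power2_norm_eq_inner
        by (simp add: inner_add_left inner_add_right inner_diff_left inner_diff_right inner_commute)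
    qed
    have h_bd: "h (Xt + E) + h (Xt - E) - 2 * h Xt \<le> - nh * e2"
    proof -
      have trm: "(Xt $ i $ j + E $ i $ j + eps) powr p + (Xt $ i $ j - E $ i $ j + eps) powr p
                  - 2 * (Xt $ i $ j + eps) powr p \<le> - nh * (E $ i $ j)\<^sup>2" for i j
      proof -
        have "Xt $ i $ j - E $ i $ j \<ge> 0" "Xt $ i $ j + E $ i $ j \<le> 1" "Xt $ i $ j - E $ i $ j \<le> 1" "Xt $ i $ j + E $ i $ j \<ge> 0"
          using ds_nonneg[OF Ep(1), of i j] ds_le1[OF Ep(1), of i j] ds_nonneg[OF Ep(2), of i j] ds_le1[OF Ep(2), of i j]
          by simp_all
        from phi_mid[OF eps p this] show ?thesis unfolding nh_def by simp
      qed
      have "h (Xt + E) + h (Xt - E) - 2 * h Xt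
          = (\<Sum>i\<in>UNIV. \<Sum>j\<in>UNIV. (Xt $ i $ j + E $ i $ j + eps) powr p + (Xt $ i $ j - E $ i $ j + eps) powr p
                  - 2 * (Xt $ i $ j + eps) powr p)"
        unfolding h_def by (simp add: sum.distrib sum_subtractf sum_distrib_left)
      also have "\<dots> \<le> (\<Sum>i\<in>UNIV. \<Sum>j\<in>UNIV. - nh * (E $ i $ j)\<^sup>2)"
        by (intro sum_mono) (rule trm)
      also have "\<dots> = - nh * e2" unfolding e2_def norm2_eq by (simp add: sum_distrib_left)
      finally show ?thesis .
    qed
    have "F Xt \<le> F (Xt + E)" "F Xt \<le> F (Xt - E)" using Fmin Ep by auto
    hence "0 \<le> F (Xt + E) + F (Xt - E) - 2 * F Xt" by simp
    also have "\<dots> = (f (Xt + E) + f (Xt - E) - 2 * f Xt) + sigma * (h (Xt + E) + h (Xt - E) - 2 * h Xt)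
        - mu * ((norm (Xt + E - Xbar))\<^sup>2 + (norm (Xt - E - Xbar))\<^sup>2 - 2 * (norm (Xt - Xbar))\<^sup>2)"
      unfolding F_def by (simp add: algebra_simps)
    also have "\<dots> = (f (Xt + E) + f (Xt - E) - 2 * f Xt) + sigma * (h (Xt + E) + h (Xt - E) - 2 * h Xt)
        - mu * (2 * e2)" unfolding n_bd by simp
    also have "\<dots> \<le> nu_hi * e2 + sigma * (- nh * e2) - mu * (2 * e2)"
      using f_bd mult_left_mono[OF h_bd less_imp_le[OF sig_pos]] by linarith
    also have "\<dots> = (nu_hi - sigma * nh - 2 * mu) * e2" by (simp add: algebra_simps)
    also have "\<dots> < 0" using sig_nh e2pos by (intro mult_neg_pos) auto
    finally show False by simp
  qed
  have Kpos: "real K > 0" using K by simp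
  have xb: "0 \<le> Xbar $ i $ j \<and> Xbar $ i $ j \<le> 1" for i j
  proof -
    define S where "S = (\<Sum>k=1..K. Xhat k $ i $ j)"
    have x: "Xbar $ i $ j = S / real K" unfolding Xbar S_def by simp
    have "0 \<le> S" unfolding S_def by (rule sum_nonneg) (use Xhat ds_nonneg in blast)
    moreover have "S \<le> of_nat (card {1..K}) * 1" unfolding S_def
      by (rule sum_bounded_above) (use Xhat ds_le1 in blast)
    ultimately show ?thesis unfolding x using Kpos by (simp add: divide_le_eq)
  qed
  define N where "N X = (norm (X - Xbar))\<^sup>2" for X
  have Ndiff: "N Xt - N Y \<le> 2 * real CARD('n)" if "Y \<in> perm_matrices" for Y
    using perm_norm[OF Xt_perm, of Xbar] perm_norm[OF that, of Xbar]
      perm_inner[OF Xt_perm xb] perm_inner[OF that xb]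
    unfolding N_def by linarith
  have key: "f Xt - mu * N Xt \<le> f Y - mu * N Y" if "Y \<in> perm_matrices" for Y
  proof -
    have "F Xt \<le> F Y" using Fmin perm_ds[OF that] by blast
    moreover have "h Xt = h Y" unfolding h_def perm_h[OF Xt_perm] perm_h[OF that] ..
    ultimately show ?thesis unfolding F_def N_def by simp
  qed
  have cpos: "real CARD('n) > 0" by simp
  have mu2: "mu * (2 * real CARD('n)) < c2" using mu(2) cpos by (simp add: less_divide_eq mult.commute)
  have fmin: "f Xt \<le> f Y" if "Y \<in> perm_matrices" for Y
  proof (rule ccontr)
    assume "\<not> f Xt \<le> f Y"
    hence "f Xt \<noteq> f Y" "f Y < f Xt" by auto
    hence "f Xt - f Y \<ge> c2" using c2 Xt_perm that by fastforce
    moreover have "f Xt - f Y \<le> mu * (N Xt - N Y)" using key[OF that] by (simp add: algebra_simps)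
    moreover have "mu * (N Xt - N Y) \<le> mu * (2 * real CARD('n))"
      using Ndiff[OF that] mu(1) by (intro mult_left_mono) auto
    ultimately show False using mu2 by linarith
  qed
  have third: "norm (Xt - Xbar) \<ge> norm (Xs - Xbar)"
    if "Xs \<in> perm_matrices" "\<forall>Y\<in>perm_matrices. f Xs \<le> f Y" for Xs
  proof -
    have "f Xs = f Xt" using that fmin[OF that(1)] Xt_perm by (meson order_antisym)
    hence "mu * N Xs \<le> mu * N Xt" using key[OF that(1)] by simp
    hence "N Xs \<le> N Xt" using mu(1) by simp
    thus ?thesis unfolding N_def by (rule power2_le_imp_le) simp
  qed
  show ?thesis using Xt_perm fmin third by blast
qed


end
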